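(* Let $m\ge2$ and let $K_m$ have Laplacian $L$. Let $\{a_1,b_1\},\dots,\{a_r,b_r\}$ be pairwise vertex-disjoint edges of $K_m$, and let $\tilde L=L-\tfrac34\sum_{j=1}^r(\mathbf e_{a_j}-\mathbf e_{b_j})(\mathbf e_{a_j}-\mathbf e_{b_j})^T$ be the Laplacian of the weighted graph obtained from $K_m$ by setting the weight of each of these edges to $\tfrac14$. Then $\tilde L$ exhibits perfect state transfer at time $2\pi$ between $a_j$ and $b_j$ for every $j=1,\dots,r$.
   Context: $L=D-A$ is the Laplacian; $\mathbf e_u$ is the standard basis vector of vertex $u$. For a real symmetric $H$, $U_H(t)=\exp(-itH)$, and $H$ exhibits perfect state transfer between distinct $u,v$ at time $\tau$ if $U_H(\tau)\mathbf e_u=\gamma\mathbf e_v$ for some $\gamma\in\mathbb C$. *)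

theory Defs
  imports "HOL-Analysis.Analysis"
begin

primrec mpow :: "'a::semiring_1 ^'n^'n \<Rightarrow> nat \<Rightarrow> 'a^'n^'n" where
  "mpow A 0 = mat 1"
| "mpow A (Suc k) = A ** mpow A k"

definition mexp :: "complex^'n^'n \<Rightarrow> complex^'n^'n" where
  "mexp A = (\<Sum>k. (1 / fact k) *\<^sub>R mpow A k)"

definition evec :: "'n \<Rightarrow> 'a::zero_neq_one^'n" where
  "evec u = (\<chi> i. if i = u then 1 else 0)"

definition U :: "real^'n^'n \<Rightarrow> real \<Rightarrow> complex^'n^'n" where
  "U H t = mexp (\<chi> i j. (- \<i> * complex_of_real t) * complex_of_real (H $ i $ j))"

definition pst :: "real^'n^'n \<Rightarrow> 'n \<Rightarrow> 'n \<Rightarrow> real \<Rightarrow> bool" where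
  "pst H u v \<tau> \<longleftrightarrow> u \<noteq> v \<and> (\<exists>\<gamma>::complex. U H \<tau> *v evec u = \<gamma> *s evec v)"

definition lap_complete :: "real^'n^'n" where
  "lap_complete = (\<chi> i j. if i = j then real CARD('n) - 1 else -1)"

definition outer :: "real^'n \<Rightarrow> real^'n^'n" where
  "outer x = (\<chi> i j. x $ i * x $ j)"

definition Ltilde :: "nat \<Rightarrow> (nat \<Rightarrow> 'n) \<Rightarrow> (nat \<Rightarrow> 'n) \<Rightarrow> real^'n^'n" where
  "Ltilde r a b = lap_complete - (3/4) *\<^sub>R (\<Sum>j<r. outer (evec (a j) - evec (b j)))"

end

theory Submission imports Defs begin

lemma mpow_entry_bound:
  fixes A :: "complex^'n::finite^'n"
  assumes M: "\<And>i. (\<Sum>l\<in>UNIV. norm (A$i$l)) \<le> M"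
  shows "norm (mpow A k $ i $ j) \<le> M^k"
proof (induction k arbitrary: i j)
  case 0
  then show ?case by (simp add: mat_def)
next
  case (Suc k)
  have M0: "0 \<le> M" using M[of i] by (meson order_trans sum_nonneg norm_ge_zero)
  have "norm (mpow A (Suc k) $ i $ j) = norm (\<Sum>l\<in>UNIV. A$i$l * mpow A k $ l $ j)"
    by (simp add: matrix_matrix_mult_def)
  also have "\<dots> \<le> (\<Sum>l\<in>UNIV. norm (A$i$l) * norm (mpow A k $ l $ j))"
    by (rule order_trans[OF norm_sum]) (simp add: norm_mult)
  also have "\<dots> \<le> (\<Sum>l\<in>UNIV. norm (A$i$l) * M^k)"
    by (intro sum_mono mult_left_mono Suc.IH) auto
  also have "\<dots> = (\<Sum>l\<in>UNIV. norm (A$i$l)) * M^k" by (simp add: sum_distrib_right)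
  also have "\<dots> \<le> M * M^k" using M[of i] M0 by (intro mult_right_mono) auto
  finally show ?case by simp
qed

lemma mexp_summable:
  fixes A :: "complex^'n::finite^'n"
  shows "summable (\<lambda>k. (1 / fact k) *\<^sub>R mpow A k)"
proof -
  define M where "M = (\<Sum>i\<in>UNIV. \<Sum>l\<in>UNIV. norm (A$i$l))"
  have Mb: "\<And>i. (\<Sum>l\<in>UNIV. norm (A$i$l)) \<le> M"
    unfolding M_def by (rule member_le_sum) (auto intro: sum_nonneg)
  define N where "N = real CARD('n) * real CARD('n)"
  have nb: "norm (mpow A k) \<le> N * M^k" for k
  proof -
    have "norm (mpow A k) \<le> (\<Sum>i\<in>UNIV. norm (mpow A k $ i))"
      unfolding norm_vec_def by (rule L2_set_le_sum) auto
    also have "\<dots> \<le> (\<Sum>i\<in>UNIV. \<Sum>j\<in>UNIV. norm (mpow A k $ i $ j))"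
      by (intro sum_mono) (simp add: norm_vec_def L2_set_le_sum)
    also have "\<dots> \<le> (\<Sum>i\<in>(UNIV::'n set). \<Sum>j\<in>(UNIV::'n set). M^k)"
      by (intro sum_mono mpow_entry_bound Mb)
    also have "\<dots> = N * M^k" by (simp add: N_def)
    finally show ?thesis .
  qed
  show ?thesis
  proof (rule summable_comparison_test')
    show "summable (\<lambda>k. N * (inverse (fact k) * M^k))"
      by (intro summable_mult summable_exp)
    fix k :: nat
    have "norm ((1 / fact k) *\<^sub>R mpow A k) = inverse (fact k) * norm (mpow A k)"
      by (simp add: field_simps)
    also have "\<dots> \<le> inverse (fact k) * (N * M^k)" by (intro mult_left_mono nb) auto
    finally show "norm ((1 / fact k) *\<^sub>R mpow A k) \<le> N * (inverse (fact k) * M^k)"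
      by (simp add: algebra_simps)
  qed
qed

lemma mpow_eig:
  fixes A :: "complex^'n::finite^'n"
  assumes "A *v w = c *s w"
  shows "mpow A k *v w = (c^k) *s w"
proof (induction k)
  case 0 then show ?case by (simp add: matrix_vector_mul_lid)
next
  case (Suc k)
  have "mpow A (Suc k) *v w = A *v (mpow A k *v w)" by (simp add: matrix_vector_mul_assoc)
  also have "\<dots> = c^(Suc k) *s w" using Suc assms
    by (simp add: vector_scalar_commute vector_smult_assoc mult.commute)
  finally show ?case .
qed

lemma mexp_eig:
  fixes A :: "complex^'n::finite^'n"
  assumes "A *v w = c *s w"
  shows "mexp A *v w = exp c *s w"
proof -
  have bl: "bounded_linear (\<lambda>X::complex^'n^'n. X *v w)"
    unfolding linear_conv_bounded_linear[symmetric]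
    by (rule linearI) (simp_all add: matrix_vector_mult_add_rdistrib vec_eq_iff matrix_vector_mult_def scaleR_sum_right distrib_right sum.distrib)
  have bl2: "bounded_linear (\<lambda>z::complex. z *s w)"
    unfolding linear_conv_bounded_linear[symmetric]
    by (rule linearI) (simp_all add: vec_eq_iff vector_scalar_mult_def distrib_right)
  have "mexp A *v w = (\<Sum>k. ((1 / fact k) *\<^sub>R mpow A k) *v w)"
    unfolding mexp_def using bounded_linear.suminf[OF bl mexp_summable] by simp
  also have "\<dots> = (\<Sum>k. (c^k /\<^sub>R fact k) *s w)"
  proof -
    have sc: "\<And>r X. (r *\<^sub>R X) *v w = r *\<^sub>R (X *v w)"
      by (simp add: vec_eq_iff matrix_vector_mult_def scaleR_sum_right)
    have "((1 / fact k) *\<^sub>R mpow A k) *v w = (c^k /\<^sub>R fact k) *s w" for k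
      unfolding sc mpow_eig[OF assms]
      by (simp add: vec_eq_iff vector_scalar_mult_def inverse_eq_divide)
    then show ?thesis by simp
  qed
  also have "\<dots> = (\<Sum>k. c^k /\<^sub>R fact k) *s w"
    using bounded_linear.suminf[OF bl2 summable_exp_generic] by simp
  also have "\<dots> = exp c *s w" by (simp add: exp_def)
  finally show ?thesis .
qed

definition cvec :: "real^'n \<Rightarrow> complex^'n" where
  "cvec v = (\<chi> i. complex_of_real (v$i))"

lemma lift_eig:
  fixes H :: "real^'n::finite^'n"
  assumes "H *v v = l *\<^sub>R v"
  shows "(\<chi> i j. c * complex_of_real (H$i$j)) *v cvec v = (c * of_real l) *s cvec v"
proof -
  have "(H *v v)$i = l * v$i" for i using assms by (simp add: vec_eq_iff)
  then have "(\<Sum>j\<in>UNIV. H$i$j * v$j) = l * v$i" for i by (simp add: matrix_vector_mult_def)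
  then have "(\<Sum>j\<in>UNIV. c * complex_of_real (H$i$j) * complex_of_real (v$j)) = c * of_real l * of_real (v$i)" for i
  proof -
    have "(\<Sum>j\<in>UNIV. c * complex_of_real (H$i$j) * complex_of_real (v$j))
        = c * of_real (\<Sum>j\<in>UNIV. H$i$j * v$j)"
      by (simp add: sum_distrib_left mult.assoc)
    then show ?thesis using \<open>\<And>i. (\<Sum>j\<in>UNIV. H$i$j * v$j) = l * v$i\<close>[of i] by simp
  qed
  then show ?thesis by (simp add: vec_eq_iff matrix_vector_mult_def cvec_def vector_scalar_mult_def)
qed

lemma U_eig:
  fixes H :: "real^'n::finite^'n"
  assumes "H *v v = l *\<^sub>R v"
  shows "U H t *v cvec v = exp (- \<i> * of_real t * of_real l) *s cvec v"
  unfolding U_def by (rule mexp_eig[OF lift_eig[OF assms]])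

lemma Ltilde_mult:
  fixes a b :: "nat \<Rightarrow> 'n::finite"
  shows "(Ltilde r a b *v w)$i = real CARD('n) * w$i - (\<Sum>j\<in>UNIV. w$j)
     - 3/4 * (\<Sum>k<r. (evec (a k) - evec (b k))$i * (w$(a k) - w$(b k)))"
proof -
  have l1: "(\<Sum>j\<in>UNIV. lap_complete$i$j * w$j) = real CARD('n) * w$i - (\<Sum>j\<in>UNIV. w$j)"
  proof -
    have "(\<Sum>j\<in>UNIV. lap_complete$i$j * w$j) = (\<Sum>j\<in>UNIV. (if i = j then real CARD('n) * w$j else 0) - w$j)"
      by (intro sum.cong) (auto simp: lap_complete_def algebra_simps)
    also have "\<dots> = real CARD('n) * w$i - (\<Sum>j\<in>UNIV. w$j)"
      by (simp add: sum_subtractf)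
    finally show ?thesis .
  qed
  have dw: "(\<Sum>j\<in>UNIV. (evec (a k) - evec (b k))$j * w$j) = w$(a k) - w$(b k)" for k
    by (simp add: evec_def left_diff_distrib sum_subtractf if_distrib[where f="\<lambda>x. x * _"] cong: if_cong)
  have l2: "(\<Sum>j\<in>UNIV. (\<Sum>k<r. outer (evec (a k) - evec (b k)))$i$j * w$j)
      = (\<Sum>k<r. (evec (a k) - evec (b k))$i * (w$(a k) - w$(b k)))"
  proof -
    have "(\<Sum>j\<in>UNIV. (\<Sum>k<r. outer (evec (a k) - evec (b k)))$i$j * w$j)
       = (\<Sum>j\<in>UNIV. \<Sum>k<r. (evec (a k) - evec (b k))$i * ((evec (a k) - evec (b k))$j * w$j))"
      by (simp add: outer_def sum_distrib_right mult.assoc)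
    also have "\<dots> = (\<Sum>k<r. (evec (a k) - evec (b k))$i * (\<Sum>j\<in>UNIV. (evec (a k) - evec (b k))$j * w$j))"
      by (subst sum.swap) (simp add: sum_distrib_left)
    also have "\<dots> = (\<Sum>k<r. (evec (a k) - evec (b k))$i * (w$(a k) - w$(b k)))"
      by (simp only: dw)
    finally show ?thesis .
  qed
  have "(Ltilde r a b *v w)$i = (\<Sum>j\<in>UNIV. lap_complete$i$j * w$j)
       - 3/4 * (\<Sum>j\<in>UNIV. (\<Sum>k<r. outer (evec (a k) - evec (b k)))$i$j * w$j)"
  proof -
    have c: "(Ltilde r a b)$i$j = lap_complete$i$j - 3/4 * (\<Sum>k<r. outer (evec (a k) - evec (b k)))$i$j" for j
      by (simp add: Ltilde_def)
    show ?thesis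
      by (simp only: matrix_vector_mult_def vec_lambda_beta c)
        (simp add: left_diff_distrib sum_subtractf sum_distrib_left mult.assoc del: sum_component)
  qed
  then show ?thesis using l1 l2 by simp
qed

lemma exp_m: "exp (- \<i> * complex_of_real (2 * pi) * complex_of_real (real n)) = 1"
proof -
  have "- \<i> * complex_of_real (2 * pi) * complex_of_real (real n) = 0 + \<i> * (of_int (- int n) * (of_real pi * 2))"
    by simp
  then show ?thesis by (simp only: exp_plus_2pin) simp
qed

lemma exp_m32: "exp (- \<i> * complex_of_real (2 * pi) * complex_of_real (real n - 3/2)) = -1"
proof -
  have "- \<i> * complex_of_real (2 * pi) * complex_of_real (real n - 3/2) = \<i> * pi + \<i> * (of_int (1 - int n) * (of_real pi * 2))"
    by (simp add: algebra_simps)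
  then show ?thesis by (simp only: exp_plus_2pin) (simp add: exp_pi_i')
qed

theorem mainTheorem7:
  fixes r :: nat and a b :: "nat \<Rightarrow> 'n::finite"
  assumes "CARD('n) \<ge> 2"
    and "\<forall>j<r. a j \<noteq> b j"
    and "\<forall>i<r. \<forall>j<r. i \<noteq> j \<longrightarrow> {a i, b i} \<inter> {a j, b j} = {}"
  shows "\<forall>j<r. pst (Ltilde r a b) (a j) (b j) (2 * pi)"
proof (intro allI impI)
  fix j assume j: "j < r"
  define p where "p = a j"
  define q where "q = b j"
  define m where "m = real CARD('n)"
  have m0: "m > 0" using assms(1) by (simp add: m_def)
  have pq: "p \<noteq> q" using assms(2) j by (simp add: p_def q_def)
  have dis: "a k \<noteq> p \<and> a k \<noteq> q \<and> b k \<noteq> p \<and> b k \<noteq> q" if "k < r" "k \<noteq> j" for k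
    using assms(3) j that unfolding p_def q_def by blast
  define H where "H = Ltilde r a b"
  define one :: "real^'n" where "one = (\<chi> i. 1)"
  define d :: "real^'n" where "d = (\<chi> i. (if i = p then 1 else 0) - (if i = q then 1 else 0))"
  define s :: "real^'n" where "s = (\<chi> i. (if i = p then 1 else 0) + (if i = q then 1 else 0) - 2/m)"
  have e1: "H *v one = 0 *\<^sub>R one"
    by (simp add: vec_eq_iff H_def Ltilde_mult one_def m_def)
  have e2: "H *v d = (m - 3/2) *\<^sub>R d"
  proof -
    have sd: "(\<Sum>i\<in>UNIV. d$i) = 0" by (simp add: d_def sum_subtractf)
    have t: "(evec (a k) - evec (b k))$i * (d$(a k) - d$(b k)) = (if k = j then 2 * d$i else 0)"
      if "k < r" for k i
    proof (cases "k = j")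
      case True then show ?thesis using pq by (simp add: d_def evec_def p_def q_def)
    next
      case False then show ?thesis using dis[OF that False] by (simp add: d_def)
    qed
    have "(\<Sum>k<r. (evec (a k) - evec (b k))$i * (d$(a k) - d$(b k))) = 2 * d$i" for i
    proof -
      have "(\<Sum>k<r. (evec (a k) - evec (b k))$i * (d$(a k) - d$(b k))) = (\<Sum>k<r. if k = j then 2 * d$i else 0)"
        by (rule sum.cong[OF refl]) (rule t, simp)
      then show ?thesis using j by simp
    qed
    then show ?thesis
      by (simp add: vec_eq_iff H_def Ltilde_mult sd m_def algebra_simps)
  qed
  have e3: "H *v s = m *\<^sub>R s"
  proof -
    have ss: "(\<Sum>i\<in>UNIV. s$i) = 0" using m0 by (simp add: s_def sum.distrib sum_subtractf m_def)
    have t: "s$(a k) - s$(b k) = 0" if "k < r" for k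
    proof (cases "k = j")
      case True then show ?thesis using pq by (simp add: s_def p_def q_def)
    next
      case False then show ?thesis using dis[OF that False] by (simp add: s_def)
    qed
    show ?thesis
      by (simp add: vec_eq_iff H_def Ltilde_mult ss t m_def)
  qed
  define Ut where "Ut = U H (2 * pi)"
  have u1: "Ut *v cvec one = cvec one" using U_eig[OF e1] by (simp add: Ut_def)
  have u2: "Ut *v cvec d = (-1) *s cvec d" using U_eig[OF e2] exp_m32 by (simp add: Ut_def m_def)
  have u3: "Ut *v cvec s = cvec s" using U_eig[OF e3] exp_m by (simp add: Ut_def m_def)
  have dec: "(evec p :: complex^'n) = of_real (1/m) *s cvec one + (1/2) *s cvec d + (1/2) *s cvec s"
    using m0 pq by (simp add: vec_eq_iff evec_def cvec_def one_def d_def s_def vector_scalar_mult_def field_simps)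
  have "Ut *v evec p = of_real (1/m) *s cvec one + (1/2) *s ((-1) *s cvec d) + (1/2) *s cvec s"
    unfolding dec by (simp add: matrix_vector_right_distrib vector_scalar_commute u1 u2 u3)
  also have "\<dots> = 1 *s evec q"
    using m0 pq by (simp add: vec_eq_iff evec_def cvec_def one_def d_def s_def vector_scalar_mult_def field_simps)
  finally have "Ut *v evec p = 1 *s evec q" .
  then show "pst (Ltilde r a b) (a j) (b j) (2 * pi)"
    unfolding pst_def using pq by (intro conjI exI[of _ 1]) (auto simp: Ut_def H_def p_def q_def)
qed

end
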